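(* Let $c \ge 0$ be a real number, $v\in U_n$ a unitary matrix, and $x\in M_n(\mathbb{C})$ a skew-adjoint matrix such that $\|x\|_\infty < \pi$, $v + v^{-1} \ge c\mathbf{1}$ and $(ve^x) + (ve^x)^{-1} \ge c\mathbf{1}$. Then $$(ve^{tx}) + (ve^{tx})^{-1} \ge c\mathbf{1}$$ for all $t \in [0, 1]$.
   Context: $U_n$ is the group of $n\times n$ unitary matrices, $\|x\|_\infty$ the operator norm, and $a\ge b$ for Hermitian matrices means $a-b$ is positive semidefinite. *)

theory Defs
  imports "HOL-Analysis.Analysis"
begin

type_synonym 'n cmat = "complex^'n^'n"

definition cadjoint :: "'n::finite cmat \<Rightarrow> 'n cmat" where
  "cadjoint A = (\<chi> i j. cnj (A $ j $ i))"

definition unitary :: "'n::finite cmat \<Rightarrow> bool" where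
  "unitary U \<longleftrightarrow> U ** cadjoint U = mat 1 \<and> cadjoint U ** U = mat 1"

definition skew_adjoint :: "'n::finite cmat \<Rightarrow> bool" where
  "skew_adjoint A \<longleftrightarrow> cadjoint A = - A"

definition hermitian :: "'n::finite cmat \<Rightarrow> bool" where
  "hermitian A \<longleftrightarrow> cadjoint A = A"

definition psd :: "'n::finite cmat \<Rightarrow> bool" where
  "psd A \<longleftrightarrow> hermitian A \<and>
     (\<forall>z::complex^'n. 0 \<le> Re (\<Sum>i\<in>UNIV. \<Sum>j\<in>UNIV. cnj (z $ i) * A $ i $ j * z $ j))"

definition loewner_ge :: "'n::finite cmat \<Rightarrow> 'n cmat \<Rightarrow> bool" where
  "loewner_ge A B \<longleftrightarrow> psd (A - B)"

fun mat_pow :: "'n::finite cmat \<Rightarrow> nat \<Rightarrow> 'n cmat" where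
  "mat_pow A 0 = mat 1"
| "mat_pow A (Suc k) = A ** mat_pow A k"

definition mat_exp :: "'n::finite cmat \<Rightarrow> 'n cmat" where
  "mat_exp A = (\<Sum>k. (1 / fact k) *\<^sub>R mat_pow A k)"

definition op_norm :: "'n::finite cmat \<Rightarrow> real" where
  "op_norm A = onorm (\<lambda>z::complex^'n. A *v z)"

end

theory Submission
  imports Defs
begin

definition cin :: "complex^'n::finite \<Rightarrow> complex^'n \<Rightarrow> complex" where
  "cin z w = (\<Sum>i\<in>UNIV. cnj (z$i) * w$i)"

definition qf :: "'n::finite cmat \<Rightarrow> complex^'n \<Rightarrow> complex" where
  "qf W z = (\<Sum>i\<in>UNIV. \<Sum>j\<in>UNIV. cnj (z $ i) * W $ i $ j * z $ j)"

definition nsq :: "complex^'n::finite \<Rightarrow> real" where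
  "nsq z = (\<Sum>i\<in>UNIV. (cmod (z$i))^2)"

definition GG :: "real \<Rightarrow> 'n::finite cmat \<Rightarrow> bool" where
  "GG a W \<longleftrightarrow> (\<forall>z. a * nsq z \<le> Re (qf W z))"

lemma qf_cin: "qf W z = cin z (W *v z)"
  by (simp add: qf_def cin_def matrix_vector_mult_def sum_distrib_left mult.assoc)

lemma cin_mult: "cin z (A *v y) = cin (cadjoint A *v z) y"
proof -
  have "cin z (A *v y) = (\<Sum>i\<in>UNIV. \<Sum>j\<in>UNIV. cnj (z$i) * A$i$j * y$j)"
    by (simp add: cin_def matrix_vector_mult_def sum_distrib_left mult.assoc)
  also have "\<dots> = (\<Sum>j\<in>UNIV. \<Sum>i\<in>UNIV. cnj (z$i) * A$i$j * y$j)"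
    by (rule sum.swap)
  also have "\<dots> = cin (cadjoint A *v z) y"
    by (simp add: cin_def matrix_vector_mult_def cadjoint_def sum_distrib_left mult_ac)
  finally show ?thesis .
qed

lemma cnj_mult_self: "cnj a * a = of_real ((cmod a)^2)"
  by (subst complex_norm_square) (simp add: mult.commute)

lemma cin_self: "cin z z = of_real (nsq z)"
  by (simp add: cin_def nsq_def cnj_mult_self)

lemma nsq_ge0: "nsq z \<ge> 0" by (simp add: nsq_def sum_nonneg)

lemma cadjoint_cadjoint[simp]: "cadjoint (cadjoint A) = A"
  by (simp add: cadjoint_def vec_eq_iff)

lemma cadjoint_mult: "cadjoint (A ** B) = cadjoint B ** cadjoint A"
  by (simp add: cadjoint_def vec_eq_iff matrix_matrix_mult_def mult.commute)

lemma cadjoint_add: "cadjoint (A + B) = cadjoint A + cadjoint B"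
  by (simp add: cadjoint_def vec_eq_iff)

lemma cadjoint_diff: "cadjoint (A - B) = cadjoint A - cadjoint B"
  by (simp add: cadjoint_def vec_eq_iff)

lemma cadjoint_scaleR_mat: "cadjoint (c *\<^sub>R mat 1 :: 'n::finite cmat) = c *\<^sub>R mat 1"
  by (simp add: cadjoint_def vec_eq_iff mat_def)

lemma cadjoint_mat1: "cadjoint (mat 1 :: 'n::finite cmat) = mat 1"
  by (simp add: cadjoint_def vec_eq_iff mat_def)

lemma inv_unique:
  fixes A B C :: "'n::finite cmat"
  assumes "A ** B = mat 1" "C ** A = mat 1" shows "B = C"
  by (metis assms matrix_mul_assoc matrix_mul_lid matrix_mul_rid)

lemma unitary_inv: "unitary U \<Longrightarrow> matrix_inv U = cadjoint U"
proof -
  assume u: "unitary U"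
  hence ex: "\<exists>A'. U ** A' = mat 1 \<and> A' ** U = mat 1" unfolding unitary_def by blast
  have "U ** matrix_inv U = mat 1 \<and> matrix_inv U ** U = mat 1"
    unfolding matrix_inv_def by (rule someI_ex[OF ex])
  then show ?thesis using u unfolding unitary_def by (metis inv_unique)
qed

lemma unitary_mult: "unitary A \<Longrightarrow> unitary B \<Longrightarrow> unitary (A ** B)"
  unfolding unitary_def cadjoint_mult
  by (metis matrix_mul_assoc matrix_mul_rid)

lemma unitary_adj: "unitary A \<Longrightarrow> unitary (cadjoint A)"
  unfolding unitary_def by simp

lemma unitary_left: "cadjoint U ** U = mat 1 \<Longrightarrow> unitary U"
  unfolding unitary_def using matrix_left_right_inverse by blast

lemma qf_add: "qf (A + B) z = qf A z + qf B z"
  by (simp add: qf_def algebra_simps sum.distrib)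

lemma qf_diff: "qf (A - B) z = qf A z - qf B z"
  by (simp add: qf_def algebra_simps sum_subtractf)

lemma qf_scal: fixes z :: "complex^'n::finite" shows "qf (c *\<^sub>R mat 1) z = of_real (c * nsq z)"
proof -
  have e: "(c *\<^sub>R mat 1 :: 'n cmat) $ i $ j = (if i = j then of_real c else 0)" for i j
    by (simp add: mat_def of_real_def)
  have "qf (c *\<^sub>R mat 1) z = (\<Sum>i\<in>UNIV. \<Sum>j\<in>UNIV. if i = j then cnj (z $ i) * of_real c * z $ j else 0)"
    unfolding qf_def e by (intro sum.cong) auto
  also have "\<dots> = (\<Sum>i\<in>UNIV. cnj (z $ i) * of_real c * z $ i)"
    by simp
  also have "\<dots> = of_real c * (\<Sum>i\<in>UNIV. cnj (z $ i) * z $ i)"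
    by (simp add: sum_distrib_left mult_ac)
  also have "\<dots> = of_real (c * nsq z)"
    using cin_self[of z] by (simp add: cin_def)
  finally show ?thesis .
qed

lemma qf_adj: "qf (cadjoint A) z = cnj (qf A z)"
proof -
  have "qf (cadjoint A) z = (\<Sum>i\<in>UNIV. \<Sum>j\<in>UNIV. cnj (z $ i) * cnj (A $ j $ i) * z $ j)"
    by (simp add: qf_def cadjoint_def)
  also have "\<dots> = (\<Sum>j\<in>UNIV. \<Sum>i\<in>UNIV. cnj (z $ i) * cnj (A $ j $ i) * z $ j)"
    by (rule sum.swap)
  also have "\<dots> = cnj (qf A z)"
    by (simp add: qf_def mult_ac)
  finally show ?thesis .
qed

lemma hermitian_form: "hermitian (u + cadjoint u - c *\<^sub>R mat 1)"
  unfolding hermitian_def cadjoint_add cadjoint_diff cadjoint_scaleR_mat by simp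

lemma loewner_GG:
  assumes "unitary u"
  shows "loewner_ge (u + matrix_inv u) (c *\<^sub>R mat 1) \<longleftrightarrow> GG (c/2) u"
proof -
  have q: "Re (qf (u + cadjoint u - c *\<^sub>R mat 1) z) = 2 * Re (qf u z) - c * nsq z" for z
    by (simp add: qf_add qf_diff qf_scal qf_adj)
  have "loewner_ge (u + matrix_inv u) (c *\<^sub>R mat 1) \<longleftrightarrow> (\<forall>z. 0 \<le> Re (qf (u + cadjoint u - c *\<^sub>R mat 1) z))"
    unfolding loewner_ge_def psd_def unitary_inv[OF assms] qf_def[symmetric]
    using hermitian_form by blast
  also have "\<dots> \<longleftrightarrow> GG (c/2) u"
    unfolding q GG_def by (auto simp: field_simps)
  finally show ?thesis .
qed

definition diagm :: "('n::finite \<Rightarrow> complex) \<Rightarrow> 'n cmat" where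
  "diagm d = (\<chi> i j. if i = j then d i else 0)"

lemma cin_add_left: "cin (a + b) c = cin a c + cin b c"
  by (simp add: cin_def algebra_simps sum.distrib)
lemma cin_add_right: "cin c (a + b) = cin c a + cin c b"
  by (simp add: cin_def algebra_simps sum.distrib)
lemma cin_diff_right: "cin c (a - b) = cin c a - cin c b"
  by (simp add: cin_def algebra_simps sum_subtractf)
lemma cin_scaleR_left: "cin (r *\<^sub>R a) b = r *\<^sub>R cin a b"
  by (simp add: cin_def scaleR_sum_right)
lemma cin_scaleR_right: "cin a (r *\<^sub>R b) = r *\<^sub>R cin a b"
  by (simp add: cin_def scaleR_sum_right)
lemma cin_cnj: "cin b a = cnj (cin a b)"
  by (simp add: cin_def mult.commute)
lemma mv_add: "(H::'n::finite cmat) *v (a + b) = H *v a + H *v b"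
  by (simp add: matrix_vector_mult_def vec_eq_iff algebra_simps sum.distrib)
lemma mv_scaleR: "(H::'n::finite cmat) *v (r *\<^sub>R a) = r *\<^sub>R (H *v a)"
  by (simp add: matrix_vector_mult_def vec_eq_iff scaleR_sum_right)
lemma inner_cin: "inner a b = Re (cin a b)"
  by (simp add: inner_vec_def cin_def inner_complex_def Re_sum)
lemma nsq_norm: "nsq z = (norm z)^2"
  by (simp add: nsq_def norm_vec_def L2_set_def sum_nonneg)
lemma nsq_zero: "nsq z = 0 \<longleftrightarrow> z = 0"
  by (metis nsq_norm norm_eq_zero power_zero_numeral zero_eq_power2)
lemma cin_herm: "hermitian H \<Longrightarrow> cin z (H *v w) = cin (H *v z) w"
  by (simp add: cin_mult hermitian_def)
lemma Re_cin_self: "Re (cin z z) = nsq z"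
  by (simp add: cin_self)

lemma exists_orth:
  fixes E :: "(complex^'n::finite) set"
  assumes "finite E" "card E < CARD('n)"
  shows "\<exists>z. z \<noteq> 0 \<and> (\<forall>e\<in>E. cin e z = 0)"
proof -
  define B where "B = E \<union> (\<lambda>e. (\<chi> k. \<i> * e$k)) ` E"
  have "finite B" using assms by (simp add: B_def)
  have "card B \<le> card E + card E"
    using card_Un_le[of E "(\<lambda>e. (\<chi> k. \<i> * e$k)) ` E"] card_image_le[OF assms(1), of "\<lambda>e. (\<chi> k. \<i> * e$k)"]
    unfolding B_def by linarith
  moreover have "DIM(complex^'n) = 2 * CARD('n)" by simp
  ultimately have dB: "dim B < DIM(complex^'n)"
    using assms dim_le_card'[OF \<open>finite B\<close>] by linarith
  obtain x where x: "x \<noteq> 0" "\<And>y. y \<in> span B \<Longrightarrow> orthogonal x y"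
    using orthogonal_to_subspace_exists[OF dB] by blast
  have "cin e x = 0" if "e \<in> E" for e
  proof -
    have "orthogonal x e" using x(2)[of e] that by (simp add: B_def span_base)
    hence 1: "Re (cin x e) = 0" by (simp add: orthogonal_def inner_cin)
    have "orthogonal x (\<chi> k. \<i> * e$k)" using x(2) that by (simp add: B_def span_base)
    hence "Re (cin x (\<chi> k. \<i> * e$k)) = 0" by (simp add: orthogonal_def inner_cin)
    moreover have "cin x (\<chi> k. \<i> * e$k) = \<i> * cin x e"
      unfolding cin_def by (simp add: sum_distrib_left mult.left_commute)
    ultimately have "Im (cin x e) = 0" by simp
    with 1 have "cin x e = 0" by (simp add: complex_eq_iff)
    then show ?thesis by (simp add: cin_cnj[of e x])
  qed
  with x show ?thesis by blast
qed

lemma cin_expand: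
  "cin (a + e *\<^sub>R b) (c + e *\<^sub>R d) = cin a c + e *\<^sub>R (cin a d + cin b c) + (e*e) *\<^sub>R cin b d"
proof -
  have "cin (a + e *\<^sub>R b) (c + e *\<^sub>R d) = cin a (c + e *\<^sub>R d) + cin (e *\<^sub>R b) (c + e *\<^sub>R d)"
    by (rule cin_add_left)
  also have "\<dots> = (cin a c + e *\<^sub>R cin a d) + e *\<^sub>R (cin b c + e *\<^sub>R cin b d)"
    by (simp only: cin_add_right cin_scaleR_left cin_scaleR_right scaleR_add_right)
  also have "\<dots> = cin a c + e *\<^sub>R (cin a d + cin b c) + (e*e) *\<^sub>R cin b d"
    by (simp add: scaleR_conv_of_real algebra_simps)
  finally show ?thesis .
qed

lemma continuous_qf: "continuous_on A (\<lambda>z. Re (qf H z))"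
  unfolding qf_def by (intro continuous_intros)

lemma continuous_cin: "continuous_on A (\<lambda>z. cin e z)"
  unfolding cin_def by (intro continuous_intros)

lemma eig_step:
  fixes H :: "'n::finite cmat" and E :: "(complex^'n) set"
  assumes herm: "hermitian H" and fin: "finite E" "card E < CARD('n)"
    and eig: "\<And>e. e \<in> E \<Longrightarrow> \<exists>\<mu>::real. H *v e = \<mu> *\<^sub>R e"
  shows "\<exists>z (\<mu>::real). nsq z = 1 \<and> H *v z = \<mu> *\<^sub>R z \<and> (\<forall>e\<in>E. cin e z = 0)"
proof -
  define S where "S = {z. \<forall>e\<in>E. cin e z = 0}"
  define R where "R = (\<lambda>z. Re (qf H z))"
  define K where "K = sphere (0::complex^'n) 1 \<inter> S"
  have S_add: "a + b \<in> S" if "a \<in> S" "b \<in> S" for a b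
    using that by (simp add: S_def cin_add_right)
  have S_scale: "r *\<^sub>R a \<in> S" if "a \<in> S" for a r
    using that by (simp add: S_def cin_scaleR_right)
  have S_diff: "a - b \<in> S" if "a \<in> S" "b \<in> S" for a b
    using that by (simp add: S_def cin_diff_right)
  have "closed S"
  proof -
    have "S = (\<Inter>e\<in>E. {z. cin e z = 0})" by (auto simp: S_def)
    moreover have "closed {z. cin e z = 0}" for e
      by (rule closed_Collect_eq) (auto intro: continuous_cin continuous_on_const)
    ultimately show ?thesis by auto
  qed
  hence "compact K" unfolding K_def by (simp add: compact_Int_closed)
  obtain z1 where z1: "z1 \<noteq> 0" "\<forall>e\<in>E. cin e z1 = 0" using exists_orth[OF fin] by blast
  have "(1/norm z1) *\<^sub>R z1 \<in> K"
    using z1 S_scale[of z1] by (simp add: K_def S_def)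
  hence "K \<noteq> {}" by blast
  then obtain z0 where z0K: "z0 \<in> K" and z0max: "\<And>y. y \<in> K \<Longrightarrow> R y \<le> R z0"
    using continuous_attains_sup[OF \<open>compact K\<close> _ continuous_qf[of K H]] unfolding R_def by blast
  define lam where "lam = R z0"
  have z0S: "z0 \<in> S" and nz0: "norm z0 = 1" using z0K by (auto simp: K_def)
  have nsqz0: "nsq z0 = 1" using nz0 by (simp add: nsq_norm)
  have Rcin: "R z = Re (cin z (H *v z))" for z by (simp add: R_def qf_cin)
  have key: "R w \<le> lam * nsq w" if "w \<in> S" for w
  proof (cases "w = 0")
    case True then show ?thesis by (simp add: R_def qf_def nsq_def)
  next
    case False
    define w' where "w' = (1/norm w) *\<^sub>R w"
    have "w' \<in> K" using that False S_scale by (simp add: K_def w'_def)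
    hence "R w' \<le> lam" using z0max by (simp add: lam_def)
    moreover have "R w' = (1/norm w)^2 * R w"
      by (simp add: Rcin w'_def mv_scaleR cin_scaleR_left cin_scaleR_right power2_eq_square)
    ultimately have "(1/norm w)^2 * R w \<le> lam" by simp
    hence "R w \<le> lam * (norm w)^2" using False by (simp add: field_simps)
    then show ?thesis by (simp add: nsq_norm)
  qed
  define r where "r = H *v z0 - lam *\<^sub>R z0"
  have rS: "r \<in> S"
  proof -
    have "H *v z0 \<in> S"
      unfolding S_def
    proof (rule CollectI, rule ballI)
      fix e assume "e \<in> E"
      then obtain \<mu> where "H *v e = \<mu> *\<^sub>R e" using eig by blast
      then have "cin e (H *v z0) = \<mu> *\<^sub>R cin e z0"
        using cin_herm[OF herm] by (simp add: cin_scaleR_left)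
      then show "cin e (H *v z0) = 0" using z0S \<open>e\<in>E\<close> by (simp add: S_def)
    qed
    then show ?thesis unfolding r_def using S_diff S_scale z0S by blast
  qed
  have Hz0: "H *v z0 = r + lam *\<^sub>R z0" by (simp add: r_def)
  have ineq: "2 * e * nsq r \<le> e * e * (lam * nsq r - R r)" for e
  proof -
    have wS: "z0 + e *\<^sub>R r \<in> S" using S_add S_scale z0S rS by blast
    have c1: "cin z0 (H *v r) = cin r r + lam *\<^sub>R cin z0 r"
      using cin_herm[OF herm, of z0 r] by (simp add: Hz0 cin_add_left cin_scaleR_left)
    have c2: "cin r (H *v z0) = cin r r + lam *\<^sub>R cin r z0"
      by (simp add: Hz0 cin_add_right cin_scaleR_right)
    have c3: "Re (cin z0 r) = Re (cin r z0)" by (simp add: cin_cnj[of z0 r])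
    have "R (z0 + e *\<^sub>R r) = Re (cin z0 (H *v z0)) + e * (Re (cin z0 (H *v r)) + Re (cin r (H *v z0))) + e*e * Re (cin r (H *v r))"
      unfolding Rcin mv_add mv_scaleR cin_expand by simp
    also have "\<dots> = lam + e * (2 * nsq r + 2 * lam * Re (cin r z0)) + e * e * R r"
      using c1 c2 c3 by (simp add: Rcin[symmetric] lam_def Re_cin_self)
    finally have A: "R (z0 + e *\<^sub>R r) = lam + e * (2 * nsq r + 2 * lam * Re (cin r z0)) + e * e * R r" .
    have "nsq (z0 + e *\<^sub>R r) = Re (cin (z0 + e *\<^sub>R r) (z0 + e *\<^sub>R r))" by (simp add: Re_cin_self)
    also have "\<dots> = 1 + e * (2 * Re (cin r z0)) + e * e * nsq r"
      unfolding cin_expand using c3 nsqz0 by (simp add: Re_cin_self)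
    finally have B: "nsq (z0 + e *\<^sub>R r) = 1 + e * (2 * Re (cin r z0)) + e * e * nsq r" .
    from key[OF wS] A B show ?thesis by (simp add: algebra_simps)
  qed
  have "nsq r = 0"
  proof (rule ccontr)
    assume "nsq r \<noteq> 0"
    hence pos: "nsq r > 0" using nsq_ge0[of r] by linarith
    define M where "M = \<bar>lam * nsq r - R r\<bar> + 1"
    have Mpos: "M > 0" by (simp add: M_def)
    define e where "e = nsq r / M"
    have epos: "e > 0" using pos Mpos by (simp add: e_def)
    have "2 * e * nsq r \<le> e * e * (lam * nsq r - R r)" by (rule ineq)
    also have "\<dots> \<le> e * e * M"
      using epos by (intro mult_left_mono) (auto simp: M_def)
    also have "\<dots> = e * nsq r" using Mpos by (simp add: e_def)
    finally have "2 * e * nsq r \<le> e * nsq r" .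
    moreover have "e * nsq r > 0" using epos pos by simp
    ultimately show False by linarith
  qed
  hence "r = 0" by (simp add: nsq_zero)
  hence "H *v z0 = lam *\<^sub>R z0" by (simp add: r_def)
  with nsqz0 z0S show ?thesis by (auto simp: S_def)
qed

lemma eig_family:
  fixes H :: "'n::finite cmat" and I :: "'n set"
  assumes herm: "hermitian H"
  shows "\<exists>e (\<mu>::'n\<Rightarrow>real). (\<forall>i\<in>I. nsq (e i) = 1 \<and> H *v e i = \<mu> i *\<^sub>R e i) \<and>
           (\<forall>i\<in>I. \<forall>j\<in>I. i \<noteq> j \<longrightarrow> cin (e i) (e j) = 0)"
proof -
  have "finite I" by simp
  then show ?thesis
  proof (induction I rule: finite_induct)
    case empty then show ?case by simp
  next
    case (insert k I)
    from insert.IH obtain e \<mu> where e12: "(\<forall>i\<in>I. nsq (e i) = 1 \<and> H *v e i = (\<mu> i::real) *\<^sub>R e i) \<and>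
      (\<forall>i\<in>I. \<forall>j\<in>I. i \<noteq> j \<longrightarrow> cin (e i) (e j) = 0)" by (elim exE) (rule that)
    note e1 = conjunct1[OF e12] and e2 = conjunct2[OF e12]
    have "I \<subset> UNIV" using insert(2) by blast
    hence "card I < CARD('n)" by (simp add: psubset_card_mono)
    hence c: "card (e ` I) < CARD('n)" using card_image_le[OF insert(1), of e] by linarith
    have ev: "\<exists>m::real. H *v x = m *\<^sub>R x" if "x \<in> e ` I" for x
      using that e1 by blast
    obtain z \<nu> where z: "nsq z = 1" "H *v z = (\<nu>::real) *\<^sub>R z" "\<forall>x\<in>e ` I. cin x z = 0"
      using eig_step[OF herm _ c ev] insert(1) by blast
    define e' where "e' = e(k := z)"
    define \<mu>' where "\<mu>' = \<mu>(k := \<nu>)"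
    have "\<forall>i\<in>insert k I. nsq (e' i) = 1 \<and> H *v e' i = \<mu>' i *\<^sub>R e' i"
      using e1 z insert(2) by (auto simp: e'_def \<mu>'_def)
    moreover have "\<forall>i\<in>insert k I. \<forall>j\<in>insert k I. i \<noteq> j \<longrightarrow> cin (e' i) (e' j) = 0"
    proof (intro ballI impI)
      fix i j assume ij: "i \<in> insert k I" "j \<in> insert k I" "i \<noteq> j"
      show "cin (e' i) (e' j) = 0"
      proof (cases "i = k")
        case True
        then have "j \<in> I" using ij by auto
        then have "cin (e j) z = 0" using z(3) by auto
        then show ?thesis using True ij insert(2) \<open>j\<in>I\<close> by (auto simp: e'_def cin_cnj[of z])
      next
        case False
        then have iI: "i \<in> I" using ij by auto
        show ?thesis
        proof (cases "j = k")
          case True then show ?thesis using z(3) iI insert(2) by (auto simp: e'_def)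
        next
          case False then show ?thesis using e2 iI ij \<open>i \<noteq> k\<close> by (auto simp: e'_def)
        qed
      qed
    qed
    ultimately show ?case by blast
  qed
qed

lemma spectral_herm:
  fixes H :: "'n::finite cmat"
  assumes herm: "hermitian H"
  shows "\<exists>U (\<mu>::'n\<Rightarrow>real). unitary U \<and> H = U ** diagm (\<lambda>k. of_real (\<mu> k)) ** cadjoint U"
proof -
  obtain e :: "'n \<Rightarrow> complex^'n" and \<mu> :: "'n \<Rightarrow> real" where e12: "(\<forall>i\<in>UNIV. nsq (e i) = 1 \<and> H *v e i = \<mu> i *\<^sub>R e i) \<and>
           (\<forall>i\<in>UNIV. \<forall>j\<in>UNIV. i \<noteq> j \<longrightarrow> cin (e i) (e j) = 0)"
    using eig_family[OF herm, of UNIV] by (elim exE) (rule that)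
  have e1: "\<And>i. nsq (e i) = 1" "\<And>i. H *v e i = (\<mu> i::real) *\<^sub>R e i"
    and e2: "\<And>i j. i \<noteq> j \<Longrightarrow> cin (e i) (e j) = 0" using e12 by auto
  define U :: "'n cmat" where "U = (\<chi> r k. e k $ r)"
  have "cadjoint U ** U = mat 1"
  proof -
    have "(cadjoint U ** U) $ k $ l = (if k = l then 1 else 0)" for k l
    proof -
      have "(cadjoint U ** U) $ k $ l = cin (e k) (e l)"
        by (simp add: U_def cadjoint_def matrix_matrix_mult_def cin_def)
      then show ?thesis using e1(1) e2[of k l] by (simp add: cin_self)
    qed
    then show ?thesis by (simp add: vec_eq_iff mat_def)
  qed
  hence uU: "unitary U" by (rule unitary_left)
  have HU: "H ** U = U ** diagm (\<lambda>k. of_real (\<mu> k))"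
  proof -
    have "(H ** U) $ r $ k = (U ** diagm (\<lambda>k. of_real (\<mu> k))) $ r $ k" for r k
    proof -
      have "(H ** U) $ r $ k = (H *v e k) $ r"
        by (simp add: U_def matrix_matrix_mult_def matrix_vector_mult_def)
      also have "\<dots> = of_real (\<mu> k) * e k $ r" by (simp add: e1(2) of_real_def)
      also have "\<dots> = (U ** diagm (\<lambda>k. of_real (\<mu> k))) $ r $ k"
      proof -
        have "(U ** diagm (\<lambda>k. of_real (\<mu> k))) $ r $ k = (\<Sum>s\<in>UNIV. if s = k then e k $ r * of_real (\<mu> k) else 0)"
          by (simp add: U_def matrix_matrix_mult_def diagm_def if_distrib cong: if_cong)
        then show ?thesis by simp
      qed
      finally show ?thesis .
    qed
    then show ?thesis by (simp add: vec_eq_iff)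
  qed
  have "H = H ** (U ** cadjoint U)" using uU by (simp add: unitary_def)
  also have "\<dots> = U ** diagm (\<lambda>k. of_real (\<mu> k)) ** cadjoint U"
    by (metis HU matrix_mul_assoc)
  finally show ?thesis using uU by blast
qed

lemma diag_entry: "(U ** diagm f ** V) $ r $ c = (\<Sum>s\<in>UNIV. U$r$s * f s * V$s$c)"
proof -
  have "(U ** diagm f) $ r $ s = U$r$s * f s" for s
  proof -
    have "(U ** diagm f) $ r $ s = (\<Sum>k\<in>UNIV. U$r$k * (if k = s then f k else 0))"
      unfolding matrix_matrix_mult_def diagm_def by simp
    also have "\<dots> = (\<Sum>k\<in>UNIV. if k = s then U$r$k * f k else 0)"
      by (rule sum.cong) auto
    finally show ?thesis by simp
  qed
  then show ?thesis by (simp add: matrix_matrix_mult_def)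
qed

lemma diagm_mult: "diagm f ** diagm g = diagm (\<lambda>i. f i * g i)"
proof -
  have "(diagm f ** diagm g) $ r $ c = diagm (\<lambda>i. f i * g i) $ r $ c" for r c
  proof -
    have "(diagm f ** diagm g) $ r $ c = (\<Sum>s\<in>UNIV. (if r = s then f r else 0) * (if s = c then g s else 0))"
      unfolding matrix_matrix_mult_def diagm_def by simp
    also have "\<dots> = (\<Sum>s\<in>UNIV. if s = r then (if r = c then f r * g r else 0) else 0)"
      by (rule sum.cong) auto
    finally show ?thesis by (simp add: diagm_def)
  qed
  then show ?thesis by (simp add: vec_eq_iff)
qed

lemma diagm_one: "diagm (\<lambda>i. 1) = mat 1"
  by (simp add: diagm_def mat_def)

lemma mat_pow_diagm: "mat_pow (diagm f) k = diagm (\<lambda>i. f i ^ k)"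
  by (induction k) (simp_all add: diagm_one diagm_mult)

lemma mat_pow_conj:
  assumes "unitary U"
  shows "mat_pow (U ** D ** cadjoint U) k = U ** mat_pow D k ** cadjoint U"
proof (induction k)
  case 0
  then show ?case using assms by (simp add: unitary_def)
next
  case (Suc k)
  have UU: "cadjoint U ** U = mat 1" using assms by (simp add: unitary_def)
  have "mat_pow (U ** D ** cadjoint U) (Suc k) = (U ** D ** cadjoint U) ** (U ** mat_pow D k ** cadjoint U)"
    using Suc by simp
  also have "\<dots> = U ** D ** (cadjoint U ** U) ** mat_pow D k ** cadjoint U"
    by (simp add: matrix_mul_assoc)
  also have "\<dots> = U ** mat_pow D (Suc k) ** cadjoint U"
    by (simp add: UU matrix_mul_assoc)
  finally show ?case .
qed

lemma sums_vec2:
  fixes F :: "nat \<Rightarrow> 'n::finite cmat"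
  assumes "\<And>i j. (\<lambda>k. F k $ i $ j) sums (L $ i $ j)"
  shows "F sums L"
  unfolding sums_def
proof (rule vec_tendstoI)
  fix i
  show "((\<lambda>n. (\<Sum>k<n. F k) $ i) \<longlongrightarrow> L $ i) sequentially"
  proof (rule vec_tendstoI)
    fix j
    show "((\<lambda>n. (\<Sum>k<n. F k) $ i $ j) \<longlongrightarrow> L $ i $ j) sequentially"
      using assms[of i j] by (simp add: sums_def)
  qed
qed

lemma scaleR_diag_conj: "r *\<^sub>R (U ** diagm f ** V) = U ** diagm (\<lambda>i. r *\<^sub>R f i) ** V"
  by (simp add: vec_eq_iff diag_entry scaleR_sum_right)

lemma mat_exp_conj:
  assumes "unitary U"
  shows "mat_exp (U ** diagm d ** cadjoint U) = U ** diagm (\<lambda>k. exp (d k)) ** cadjoint U"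
proof -
  define F where "F = (\<lambda>k. (1 / fact k) *\<^sub>R mat_pow (U ** diagm d ** cadjoint U) k)"
  have Fk: "F k = U ** diagm (\<lambda>i. (1 / fact k) *\<^sub>R d i ^ k) ** cadjoint U" for k
    unfolding F_def mat_pow_conj[OF assms] mat_pow_diagm scaleR_diag_conj ..
  have "F sums (U ** diagm (\<lambda>k. exp (d k)) ** cadjoint U)"
  proof (rule sums_vec2)
    fix r c
    have "(\<lambda>k. U$r$s * ((1 / fact k) *\<^sub>R d s ^ k) * cadjoint U$s$c) sums (U$r$s * exp (d s) * cadjoint U$s$c)" for s
    proof -
      have "(\<lambda>k. (1 / fact k) *\<^sub>R d s ^ k) sums exp (d s)"
        using exp_converges[of "d s"] by (simp add: divide_inverse_commute)
      then show ?thesis by (intro sums_mult sums_mult2)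
    qed
    then have "(\<lambda>k. \<Sum>s\<in>UNIV. U$r$s * ((1 / fact k) *\<^sub>R d s ^ k) * cadjoint U$s$c) sums (\<Sum>s\<in>UNIV. U$r$s * exp (d s) * cadjoint U$s$c)"
      by (rule sums_sum)
    then show "(\<lambda>k. F k $ r $ c) sums ((U ** diagm (\<lambda>k. exp (d k)) ** cadjoint U) $ r $ c)"
      unfolding Fk diag_entry .
  qed
  then show ?thesis unfolding mat_exp_def F_def[symmetric] by (rule sums_unique[symmetric])
qed

lemma scaleR_conj: "t *\<^sub>R (U ** diagm d ** V) = U ** diagm (\<lambda>k. t *\<^sub>R d k) ** V"
  by (rule scaleR_diag_conj)

lemma unitary_diag: "(\<And>k. cmod (f k) = 1) \<Longrightarrow> unitary (diagm f)"
proof -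
  assume h: "\<And>k. cmod (f k) = 1"
  have "cadjoint (diagm f) = diagm (\<lambda>k. cnj (f k))"
    by (simp add: cadjoint_def diagm_def vec_eq_iff)
  moreover have "cnj (f k) * f k = 1" for k using h[of k] by (simp add: cnj_mult_self)
  ultimately show ?thesis
    by (intro unitary_left) (simp add: diagm_mult diagm_one)
qed

lemma Arctan_recip:
  assumes "Re c > 0"
  shows "Arctan c + Arctan (1/c) = of_real (pi/2)"
proof -
  define S where "S = {z::complex. Re z > 0}"
  have cS: "convex S" unfolding S_def by (rule convex_halfspace_Re_gt)
  have d: "((\<lambda>z. Arctan z + Arctan (1/z)) has_field_derivative 0) (at z within S)" if "z \<in> S" for z
  proof -
    have z0: "Re z > 0" using that by (simp add: S_def)
    hence nz: "z \<noteq> 0" by auto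
    have r: "Re (1/z) > 0" using z0 by (simp add: Re_divide add_pos_nonneg)
    have zz: "1 + z^2 \<noteq> 0"
    proof
      assume h: "1 + z^2 = 0"
      have e1: "Re (1 + z^2) = 1 + (Re z)^2 - (Im z)^2" by (simp add: power2_eq_square)
      have e2: "Im (1 + z^2) = 2 * Re z * Im z" by (simp add: power2_eq_square)
      from h e2 have "Re z * Im z = 0" by simp
      with z0 have "Im z = 0" by simp
      with h e1 have "1 + (Re z)^2 = 0" by simp
      moreover have "1 + (Re z)^2 > 0" by (simp add: add_pos_nonneg)
      ultimately show False by simp
    qed
    have "((\<lambda>z. Arctan z + Arctan (1/z)) has_field_derivative
            (inverse (1 + z^2) + inverse (1 + (1/z)^2) * (- inverse (z^2)))) (at z)"
      using z0 r nz
      by (auto intro!: derivative_eq_intros simp: power2_eq_square divide_inverse)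
    moreover have "inverse (1 + z^2) + inverse (1 + (1/z)^2) * (- inverse (z^2)) = 0"
      using nz zz by (simp add: field_simps power2_eq_square)
    ultimately show ?thesis by (simp add: has_field_derivative_at_within)
  qed
  obtain k where k: "\<forall>x\<in>S. Arctan x + Arctan (1/x) = k"
    using has_field_derivative_zero_constant[OF cS d] by blast
  have "1 \<in> S" by (simp add: S_def)
  hence "k = Arctan 1 + Arctan (1/1)" using k by (metis)
  also have "\<dots> = of_real (pi/2)"
    using Arctan_of_real[of 1] by (simp add: arctan_one mult.commute)
  finally show ?thesis using k assms by (simp add: S_def)
qed


lemma arctan_cond1:
  assumes "Re c > 0" "\<rho> \<ge> 0"
  shows "Re (c * of_real \<rho>) = 0 \<Longrightarrow> \<bar>Im (c * of_real \<rho>)\<bar> < 1"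
  using assms by auto

lemma arctan_cond2:
  assumes "Re c > 0" "\<rho> \<ge> 0"
  shows "Re (of_real \<rho> / c) = 0 \<Longrightarrow> \<bar>Im (of_real \<rho> / c)\<bar> < 1"
proof -
  assume h: "Re (of_real \<rho> / c) = 0"
  have "(Re c)^2 + (Im c)^2 > 0" using assms by (simp add: add_pos_nonneg)
  moreover have "Re (of_real \<rho> / c) = \<rho> * Re c / ((Re c)^2 + (Im c)^2)"
    by (simp add: Re_divide)
  ultimately have "\<rho> = 0" using h assms by (simp add: field_simps)
  then show ?thesis by simp
qed

lemma term_deriv:
  fixes b c :: complex
  assumes c: "Re c > 0" and r: "\<rho> \<ge> 0"
  shows "((\<lambda>\<zeta>. b * (Arctan (c * \<zeta>) + Arctan (\<zeta> / c)) / c) has_field_derivative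
           (b / (1 + of_real (\<rho>^2) * c^2) + b / (of_real (\<rho>^2) + c^2))) (at (of_real \<rho>))"
proof -
  have cn: "c \<noteq> 0" using c by auto
  have n1: "1 + of_real (\<rho>^2) * c^2 \<noteq> 0"
  proof
    assume h: "1 + of_real (\<rho>^2) * c^2 = 0"
    have "Im (1 + of_real (\<rho>^2) * c^2) = \<rho>^2 * (2 * Re c * Im c)" by (simp add: power2_eq_square)
    with h have d: "\<rho> = 0 \<or> Im c = 0" using c by simp
    have "Re (1 + of_real (\<rho>^2) * c^2) = 1 + \<rho>^2 * ((Re c)^2 - (Im c)^2)" by (simp add: power2_eq_square)
    with h have R: "1 + \<rho>^2 * ((Re c)^2 - (Im c)^2) = 0" by simp
    from d show False
    proof
      assume "\<rho> = 0" with R show False by simp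
    next
      assume "Im c = 0" with R have "1 + \<rho>^2 * (Re c)^2 = 0" by simp
      moreover have "\<rho>^2 * (Re c)^2 \<ge> 0" by simp
      ultimately show False by linarith
    qed
  qed
  have n2: "of_real (\<rho>^2) + c^2 \<noteq> 0"
  proof
    assume h: "of_real (\<rho>^2) + c^2 = 0"
    have "Im (of_real (\<rho>^2) + c^2) = 2 * Re c * Im c" by (simp add: power2_eq_square)
    with h have d: "Im c = 0" using c by simp
    have "Re (of_real (\<rho>^2) + c^2) = \<rho>^2 + ((Re c)^2 - (Im c)^2)" by (simp add: power2_eq_square)
    with h d have "\<rho>^2 + (Re c)^2 = 0" by simp
    moreover have "(Re c)^2 > 0" using c by simp
    moreover have "\<rho>^2 \<ge> 0" by simp
    ultimately show False by linarith
  qed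
  have "((\<lambda>\<zeta>. b * (Arctan (c * \<zeta>) + Arctan (\<zeta> / c)) / c) has_field_derivative
           b * (inverse (1 + (c * of_real \<rho>)^2) * c + inverse (1 + (of_real \<rho> / c)^2) * (1 / c)) / c) (at (of_real \<rho>))"
    using arctan_cond1[OF c r] arctan_cond2[OF c r]
    by (auto intro!: derivative_eq_intros simp: divide_inverse)
  moreover have "b * (inverse (1 + (c * of_real \<rho>)^2) * c + inverse (1 + (of_real \<rho> / c)^2) * (1 / c)) / c
      = b / (1 + of_real (\<rho>^2) * c^2) + b / (of_real (\<rho>^2) + c^2)"
  proof -
    define P where "P = 1 + of_real (\<rho>^2) * c^2"
    define Q where "Q = of_real (\<rho>^2) + c^2"
    have e1: "inverse (1 + (c * of_real \<rho>)^2) * c = c / P"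
      by (simp add: P_def power_mult_distrib mult.commute divide_inverse)
    have "1 + (of_real \<rho> / c)^2 = Q / c^2" using cn by (simp add: Q_def field_simps)
    hence e2: "inverse (1 + (of_real \<rho> / c)^2) * (1 / c) = c / Q"
      using cn by (simp add: power2_eq_square)
    have "b * (c / P + c / Q) / c = b / P + b / Q"
      using cn by (simp add: distrib_left add_divide_distrib)
    then show ?thesis unfolding e1 e2 by (simp add: P_def Q_def)
  qed
  ultimately show ?thesis by simp
qed

lemma arctan_key:
  fixes b c :: "'n::finite \<Rightarrow> complex" and A :: real
  assumes c: "\<And>k. Re (c k) > 0"
    and h1: "\<And>\<rho>. \<rho> \<ge> 0 \<Longrightarrow> A / (1 + \<rho>^2) \<le> Re (\<Sum>k\<in>UNIV. b k / (1 + of_real (\<rho>^2) * (c k)^2))"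
    and h2: "\<And>\<rho>. \<rho> \<ge> 0 \<Longrightarrow> A / (1 + \<rho>^2) \<le> Re (\<Sum>k\<in>UNIV. b k / (of_real (\<rho>^2) + (c k)^2))"
  shows "A \<le> Re (\<Sum>k\<in>UNIV. b k / c k)"
proof -
  define G where "G \<zeta> = (\<Sum>k\<in>UNIV. b k * (Arctan (c k * \<zeta>) + Arctan (\<zeta> / c k)) / c k)" for \<zeta>
  define G' where "G' \<rho> = (\<Sum>k\<in>UNIV. b k / (1 + of_real (\<rho>^2) * (c k)^2) + b k / (of_real (\<rho>^2) + (c k)^2))" for \<rho> :: real
  define \<Phi> where "\<Phi> \<rho> = Re (G (of_real \<rho>)) - 2 * A * arctan \<rho>" for \<rho> :: real
  have dG: "(G has_field_derivative G' \<rho>) (at (of_real \<rho>))" if "\<rho> \<ge> 0" for \<rho>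
    unfolding G_def G'_def by (rule DERIV_sum) (rule term_deriv[OF c that])
  have dPhi: "DERIV \<Phi> \<rho> :> Re (G' \<rho>) - 2 * A * inverse (1 + \<rho>^2)" if "\<rho> \<ge> 0" for \<rho>
  proof -
    have vd: "((\<lambda>x. G (of_real x)) has_vector_derivative G' \<rho>) (at \<rho>)"
      using has_vector_derivative_real_field[OF dG[OF that]] .
    show ?thesis unfolding \<Phi>_def
      using vd by (auto intro!: derivative_eq_intros DERIV_arctan)
  qed
  have pos: "Re (G' \<rho>) - 2 * A * inverse (1 + \<rho>^2) \<ge> 0" if "\<rho> \<ge> 0" for \<rho>
  proof -
    have "Re (G' \<rho>) = Re (\<Sum>k\<in>UNIV. b k / (1 + of_real (\<rho>^2) * (c k)^2)) + Re (\<Sum>k\<in>UNIV. b k / (of_real (\<rho>^2) + (c k)^2))"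
      by (simp add: G'_def sum.distrib)
    moreover have "2 * A * inverse (1 + \<rho>^2) = A / (1 + \<rho>^2) + A / (1 + \<rho>^2)"
      by (simp add: field_simps)
    ultimately show ?thesis using h1[OF that] h2[OF that] by linarith
  qed
  have "\<Phi> 0 \<le> \<Phi> 1"
  proof (rule DERIV_nonneg_imp_increasing_open[of 0 1 \<Phi>])
    show "\<And>x. 0 < x \<Longrightarrow> x < 1 \<Longrightarrow> \<exists>y. DERIV \<Phi> x :> y \<and> 0 \<le> y"
      using dPhi pos by (meson less_imp_le)
    show "continuous_on {0..1} \<Phi>"
      using dPhi by (auto intro!: continuous_at_imp_continuous_on DERIV_isCont)
  qed simp
  moreover have "\<Phi> 0 = 0" by (simp add: \<Phi>_def G_def)
  moreover have G1: "G 1 = of_real (pi/2) * (\<Sum>k\<in>UNIV. b k / c k)"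
  proof -
    have "G 1 = (\<Sum>k\<in>UNIV. b k * of_real (pi/2) / c k)"
      unfolding G_def by (simp only: mult_1_right Arctan_recip[OF c])
    then show ?thesis by (simp add: sum_distrib_left mult_ac)
  qed
  hence "\<Phi> 1 = pi/2 * Re (\<Sum>k\<in>UNIV. b k / c k) - 2 * A * (pi/4)"
    unfolding \<Phi>_def of_real_1 G1 by (simp add: arctan_one)
  ultimately have "0 \<le> pi/2 * (Re (\<Sum>k\<in>UNIV. b k / c k) - A)" by (simp add: algebra_simps)
  then show ?thesis using pi_gt_zero by (simp add: zero_le_mult_iff)
qed

lemma mult_diagm_entry: "(w ** diagm f) $ j $ k = w$j$k * f k"
proof -
  have "(w ** diagm f) $ j $ k = (\<Sum>s\<in>UNIV. w$j$s * (if s = k then f s else 0))"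
    unfolding matrix_matrix_mult_def diagm_def by simp
  also have "\<dots> = (\<Sum>s\<in>UNIV. if s = k then w$j$s * f s else 0)"
    by (rule sum.cong) auto
  finally show ?thesis by simp
qed

lemma qf_diag: "qf (w ** diagm f) z = (\<Sum>k\<in>UNIV. ((\<Sum>j\<in>UNIV. cnj (z$j) * w$j$k) * z$k) * f k)"
proof -
  have "qf (w ** diagm f) z = (\<Sum>j\<in>UNIV. \<Sum>k\<in>UNIV. cnj (z$j) * w$j$k * z$k * f k)"
    unfolding qf_def mult_diagm_entry by (simp add: mult_ac)
  also have "\<dots> = (\<Sum>k\<in>UNIV. \<Sum>j\<in>UNIV. cnj (z$j) * w$j$k * z$k * f k)"
    by (rule sum.swap)
  also have "\<dots> = (\<Sum>k\<in>UNIV. ((\<Sum>j\<in>UNIV. cnj (z$j) * w$j$k) * z$k) * f k)"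
    by (simp add: sum_distrib_right)
  finally show ?thesis .
qed

lemma Fgen:
  fixes w :: "'n::finite cmat" and z :: "complex^'n" and c :: "'n \<Rightarrow> complex"
  assumes a: "a \<ge> 0" and al: "\<alpha> \<ge> 0" "\<beta> \<ge> 0" "\<alpha> + \<beta> > 0"
    and c1: "\<And>k. cmod (c k) = 1" and c2: "\<And>k. Re (c k) > 0"
    and G0: "GG a w" and G1: "GG a (w ** diagm (\<lambda>k. cnj (c k)^2))"
  shows "a * nsq z / (\<alpha> + \<beta>) \<le>
    Re (\<Sum>k\<in>UNIV. ((\<Sum>j\<in>UNIV. cnj (z$j) * w$j$k) * z$k) / (of_real \<alpha> + of_real \<beta> * (c k)^2))"
proof -
  define D where "D k = of_real \<alpha> + of_real \<beta> * (c k)^2" for k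
  have cc: "cnj (c k) * c k = 1" for k using c1[of k] by (simp add: cnj_mult_self)
  have Dnz: "D k \<noteq> 0" for k
  proof
    assume h: "D k = 0"
    have "c k \<noteq> \<i>" "c k \<noteq> - \<i>" using c2[of k] by auto
    hence E: "(c k)^2 \<noteq> -1"
      by (metis power2_i power2_minus power2_eq_iff)
    show False
    proof (cases "\<beta> = 0")
      case True then show False using h al by (simp add: D_def)
    next
      case False
      from h have "of_real \<beta> * (c k)^2 = - of_real \<alpha>" by (simp add: D_def add_eq_0_iff2)
      hence "cmod (of_real \<beta> * (c k)^2) = cmod (of_real \<alpha>)" by simp
      hence "\<beta> = \<alpha>" using c1[of k] al by (simp add: norm_mult norm_power)
      with \<open>of_real \<beta> * (c k)^2 = - of_real \<alpha>\<close> have "of_real \<beta> * ((c k)^2 + 1) = 0"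
        by (simp add: algebra_simps)
      with False have "(c k)^2 + 1 = 0" by simp
      hence "(c k)^2 = -1" by (simp add: eq_neg_iff_add_eq_0)
      with E show False ..
    qed
  qed
  have Dle: "cmod (D k) \<le> \<alpha> + \<beta>" for k
  proof -
    have "cmod (D k) \<le> cmod (of_real \<alpha>) + cmod (of_real \<beta> * (c k)^2)"
      unfolding D_def by (rule norm_triangle_ineq)
    also have "\<dots> = \<alpha> + \<beta>" using al c1[of k] by (simp add: norm_mult norm_power)
    finally show ?thesis .
  qed
  define y :: "complex^'n" where "y = (\<chi> k. z$k / D k)"
  define y' :: "complex^'n" where "y' = (\<chi> k. (c k)^2 * y$k)"
  have zy: "z$k = D k * y$k" for k using Dnz[of k] by (simp add: y_def)
  have cnjD: "cnj (D k) = of_real \<alpha> + of_real \<beta> * (cnj (c k))^2" for k by (simp add: D_def)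
  have trm: "cnj (z$j) * w$j$k * z$k / D k =
      of_real \<alpha> * (cnj (y$j) * w$j$k * y$k) + of_real \<beta> * (cnj (y'$j) * (w$j$k * (cnj (c k))^2) * y'$k)" for j k
  proof -
    have "cnj (z$j) * w$j$k * z$k / D k = cnj (D j) * cnj (y$j) * w$j$k * y$k"
      using Dnz[of k] by (simp add: zy[of j] zy[of k])
    also have "\<dots> = of_real \<alpha> * (cnj (y$j) * w$j$k * y$k) + of_real \<beta> * ((cnj (c j))^2 * cnj (y$j) * w$j$k * y$k)"
      unfolding cnjD by (simp add: algebra_simps)
    also have "(cnj (c j))^2 * cnj (y$j) * w$j$k * y$k = cnj (y'$j) * (w$j$k * (cnj (c k))^2) * y'$k"
    proof -
      have "(cnj (c k))^2 * (c k)^2 = 1" using cc[of k] by (metis power_mult_distrib power_one)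
      then show ?thesis by (simp add: y'_def algebra_simps)
    qed
    finally show ?thesis .
  qed
  have sumid: "(\<Sum>k\<in>UNIV. ((\<Sum>j\<in>UNIV. cnj (z$j) * w$j$k) * z$k) / D k) =
      of_real \<alpha> * qf w y + of_real \<beta> * qf (w ** diagm (\<lambda>k. cnj (c k)^2)) y'"
  proof -
    have "(\<Sum>k\<in>UNIV. ((\<Sum>j\<in>UNIV. cnj (z$j) * w$j$k) * z$k) / D k) = (\<Sum>k\<in>UNIV. \<Sum>j\<in>UNIV. cnj (z$j) * w$j$k * z$k / D k)"
      by (simp add: sum_distrib_right sum_divide_distrib)
    also have "\<dots> = (\<Sum>k\<in>UNIV. \<Sum>j\<in>UNIV. of_real \<alpha> * (cnj (y$j) * w$j$k * y$k) + of_real \<beta> * (cnj (y'$j) * (w$j$k * (cnj (c k))^2) * y'$k))"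
      by (simp only: trm)
    also have "\<dots> = of_real \<alpha> * (\<Sum>k\<in>UNIV. \<Sum>j\<in>UNIV. cnj (y$j) * w$j$k * y$k) + of_real \<beta> * (\<Sum>k\<in>UNIV. \<Sum>j\<in>UNIV. cnj (y'$j) * (w$j$k * (cnj (c k))^2) * y'$k)"
      by (simp add: sum.distrib sum_distrib_left)
    also have "\<dots> = of_real \<alpha> * (\<Sum>j\<in>UNIV. \<Sum>k\<in>UNIV. cnj (y$j) * w$j$k * y$k) + of_real \<beta> * (\<Sum>j\<in>UNIV. \<Sum>k\<in>UNIV. cnj (y'$j) * (w$j$k * (cnj (c k))^2) * y'$k)"
      by (subst (1 2) sum.swap) (rule refl)
    also have "\<dots> = of_real \<alpha> * qf w y + of_real \<beta> * qf (w ** diagm (\<lambda>k. cnj (c k)^2)) y'"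
      by (simp add: qf_def mult_diagm_entry)
    finally show ?thesis .
  qed
  have nyy: "nsq y' = nsq y"
    unfolding nsq_def y'_def using c1 by (simp add: norm_mult norm_power)
  have nzy: "nsq z \<le> (\<alpha> + \<beta>)^2 * nsq y"
  proof -
    have "(cmod (z$k))^2 \<le> (\<alpha> + \<beta>)^2 * (cmod (y$k))^2" for k
    proof -
      have "cmod (z$k) = cmod (D k) * cmod (y$k)" by (simp add: zy norm_mult)
      also have "\<dots> \<le> (\<alpha> + \<beta>) * cmod (y$k)" using Dle[of k] by (simp add: mult_right_mono)
      finally have "cmod (z$k) \<le> (\<alpha> + \<beta>) * cmod (y$k)" .
      hence "(cmod (z$k))^2 \<le> ((\<alpha> + \<beta>) * cmod (y$k))^2" by (simp add: power_mono)
      then show ?thesis by (simp add: power_mult_distrib)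
    qed
    hence "nsq z \<le> (\<Sum>k\<in>UNIV. (\<alpha> + \<beta>)^2 * (cmod (y$k))^2)"
      unfolding nsq_def by (rule sum_mono)
    then show ?thesis by (simp add: nsq_def sum_distrib_left)
  qed
  have "Re (of_real \<alpha> * qf w y + of_real \<beta> * qf (w ** diagm (\<lambda>k. cnj (c k)^2)) y') =
        \<alpha> * Re (qf w y) + \<beta> * Re (qf (w ** diagm (\<lambda>k. cnj (c k)^2)) y')" by simp
  also have "\<dots> \<ge> \<alpha> * (a * nsq y) + \<beta> * (a * nsq y')"
    using G0 G1 al unfolding GG_def by (intro add_mono mult_left_mono) auto
  finally have R: "\<alpha> * (a * nsq y) + \<beta> * (a * nsq y) \<le> Re (of_real \<alpha> * qf w y + of_real \<beta> * qf (w ** diagm (\<lambda>k. cnj (c k)^2)) y')"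
    using nyy by simp
  have "a * nsq z / (\<alpha> + \<beta>) \<le> a * ((\<alpha> + \<beta>)^2 * nsq y) / (\<alpha> + \<beta>)"
    using nzy a al by (intro divide_right_mono mult_left_mono) auto
  also have "\<dots> = \<alpha> * (a * nsq y) + \<beta> * (a * nsq y)"
    using al by (simp add: power2_eq_square field_simps)
  finally show ?thesis using R sumid by (simp add: D_def)
qed

lemma midpoint:
  fixes w :: "'n::finite cmat" and c :: "'n \<Rightarrow> complex"
  assumes a: "a \<ge> 0" and c1: "\<And>k. cmod (c k) = 1" and c2: "\<And>k. Re (c k) > 0"
    and G0: "GG a w" and G1: "GG a (w ** diagm (\<lambda>k. cnj (c k)^2))"
  shows "GG a (w ** diagm (\<lambda>k. cnj (c k)))"
  unfolding GG_def
proof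
  fix z :: "complex^'n"
  define b where "b k = (\<Sum>j\<in>UNIV. cnj (z$j) * w$j$k) * z$k" for k
  have "a * nsq z \<le> Re (\<Sum>k\<in>UNIV. b k / c k)"
  proof (rule arctan_key[OF c2])
    fix \<rho> :: real assume r: "\<rho> \<ge> 0"
    have "a * nsq z / (1 + \<rho>^2) \<le> Re (\<Sum>k\<in>UNIV. b k / (of_real 1 + of_real (\<rho>^2) * (c k)^2))"
      unfolding b_def using r by (intro Fgen[OF a _ _ _ c1 c2 G0 G1]) (auto simp: add_pos_nonneg)
    then show "a * nsq z / (1 + \<rho>^2) \<le> Re (\<Sum>k\<in>UNIV. b k / (1 + of_real (\<rho>^2) * (c k)^2))" by simp
    have "a * nsq z / (\<rho>^2 + 1) \<le> Re (\<Sum>k\<in>UNIV. b k / (of_real (\<rho>^2) + of_real 1 * (c k)^2))"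
      unfolding b_def using r by (intro Fgen[OF a _ _ _ c1 c2 G0 G1]) (auto simp: add_nonneg_pos)
    then show "a * nsq z / (1 + \<rho>^2) \<le> Re (\<Sum>k\<in>UNIV. b k / (of_real (\<rho>^2) + (c k)^2))" by (simp add: add.commute)
  qed
  moreover have "b k / c k = b k * cnj (c k)" for k
  proof -
    have "cnj (c k) * c k = 1" using c1[of k] by (simp add: cnj_mult_self)
    hence "c k \<noteq> 0" by auto
    with \<open>cnj (c k) * c k = 1\<close> show ?thesis by (simp add: field_simps)
  qed
  ultimately show "a * nsq z \<le> Re (qf (w ** diagm (\<lambda>k. cnj (c k))) z)"
    by (simp add: qf_diag b_def)
qed

lemma mult_diagm2: fixes w :: "'n::finite cmat" shows "w ** diagm f ** diagm g = w ** diagm (\<lambda>k. f k * g k)"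
  by (metis matrix_mul_assoc diagm_mult)

lemma GG_step:
  fixes w :: "'n::finite cmat" and \<theta> :: "'n \<Rightarrow> real"
  assumes a: "a \<ge> 0" and th: "\<And>k. \<bar>\<theta> k\<bar> < pi"
    and G0: "GG a (w ** diagm (\<lambda>k. exp (\<i> * of_real (s * \<theta> k))))"
    and G1: "GG a (w ** diagm (\<lambda>k. exp (\<i> * of_real ((s + 2 * h) * \<theta> k))))"
    and h: "0 \<le> h" "h \<le> 1/2"
  shows "GG a (w ** diagm (\<lambda>k. exp (\<i> * of_real ((s + h) * \<theta> k))))"
proof -
  define w' where "w' = w ** diagm (\<lambda>k. exp (\<i> * of_real (s * \<theta> k)))"
  define c where "c k = exp (- \<i> * of_real (h * \<theta> k))" for k
  have c1: "cmod (c k) = 1" for k by (simp add: c_def)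
  have c2: "Re (c k) > 0" for k
  proof -
    have "\<bar>h * \<theta> k\<bar> < pi/2"
    proof (cases "h = 0")
      case True then show ?thesis by simp
    next
      case False
      have "\<bar>h * \<theta> k\<bar> = h * \<bar>\<theta> k\<bar>" using h by (simp add: abs_mult)
      also have "\<dots> \<le> 1/2 * \<bar>\<theta> k\<bar>" using h by (intro mult_right_mono) auto
      also have "\<dots> < pi/2" using th[of k] by simp
      finally show ?thesis .
    qed
    hence "cos (h * \<theta> k) > 0" by (intro cos_gt_zero_pi) auto
    moreover have "Re (c k) = cos (h * \<theta> k)"
      by (simp add: c_def Re_exp)
    ultimately show ?thesis by simp
  qed
  have cc: "cnj (c k) = exp (\<i> * of_real (h * \<theta> k))" for k
    by (simp add: c_def exp_cnj)
  have ee: "exp (\<i> * of_real (x * \<theta> k)) * exp (\<i> * of_real (y * \<theta> k)) = exp (\<i> * of_real ((x + y) * \<theta> k))" for x y k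
    by (simp add: exp_add[symmetric] algebra_simps)
  have f1: "(\<lambda>k. exp (\<i> * of_real (s * \<theta> k)) * cnj (c k)^2) = (\<lambda>k. exp (\<i> * of_real ((s + 2*h) * \<theta> k)))"
  proof (rule ext)
    fix k
    have "cnj (c k)^2 = exp (\<i> * of_real ((2 * h) * \<theta> k))"
      unfolding cc power2_eq_square ee by simp
    then show "exp (\<i> * of_real (s * \<theta> k)) * cnj (c k)^2 = exp (\<i> * of_real ((s + 2*h) * \<theta> k))"
      by (simp only: ee)
  qed
  have f2: "(\<lambda>k. exp (\<i> * of_real (s * \<theta> k)) * cnj (c k)) = (\<lambda>k. exp (\<i> * of_real ((s + h) * \<theta> k)))"
    unfolding cc ee ..
  have "GG a (w' ** diagm (\<lambda>k. cnj (c k)^2))"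
    unfolding w'_def mult_diagm2 f1 by (rule G1)
  from midpoint[OF a c1 c2 G0[folded w'_def] this]
  show ?thesis unfolding w'_def mult_diagm2 f2 .
qed

lemma GG_dyadic:
  fixes w :: "'n::finite cmat" and \<theta> :: "'n \<Rightarrow> real"
  assumes a: "a \<ge> 0" and th: "\<And>k. \<bar>\<theta> k\<bar> < pi"
    and G0: "GG a w" and G1: "GG a (w ** diagm (\<lambda>k. exp (\<i> * of_real (\<theta> k))))"
  shows "m \<le> 2^n \<Longrightarrow> GG a (w ** diagm (\<lambda>k. exp (\<i> * of_real ((real m / 2^n) * \<theta> k))))"
proof (induction n arbitrary: m)
  case 0
  then have "m = 0 \<or> m = 1" by auto
  then show ?case
  proof
    assume "m = 0"
    then show ?thesis using G0 by (simp add: diagm_one)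
  next
    assume "m = 1"
    then show ?thesis using G1 by simp
  qed
next
  case (Suc n)
  show ?case
  proof (cases "even m")
    case True
    then obtain l where l: "m = 2 * l" by blast
    with Suc.prems have "l \<le> 2^n" by simp
    moreover have "real m / 2^Suc n = real l / 2^n" using l by simp
    ultimately show ?thesis using Suc.IH by simp
  next
    case False
    then obtain l where l: "m = 2 * l + 1" using oddE by blast
    with Suc.prems have "l + 1 \<le> 2^n" by simp
    hence A: "GG a (w ** diagm (\<lambda>k. exp (\<i> * of_real ((real l / 2^n) * \<theta> k))))"
      and B: "GG a (w ** diagm (\<lambda>k. exp (\<i> * of_real ((real (l+1) / 2^n) * \<theta> k))))"
      using \<open>l + 1 \<le> 2^n\<close> by (intro Suc.IH; simp)+
    have e1: "real (l+1) / 2^n = real l / 2^n + 2 * (1 / 2^Suc n)" by (simp add: field_simps)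
    have e2: "real m / 2^Suc n = real l / 2^n + 1 / 2^Suc n" using l by (simp add: field_simps)
    have "(1::real) / 2^Suc n \<le> 1/2" by (simp add: field_simps)
    from GG_step[OF a th A B[unfolded e1] _ this]
    show ?thesis unfolding e2 by simp
  qed
qed

lemma GG_path:
  fixes w :: "'n::finite cmat" and \<theta> :: "'n \<Rightarrow> real"
  assumes a: "a \<ge> 0" and th: "\<And>k. \<bar>\<theta> k\<bar> < pi"
    and G0: "GG a w" and G1: "GG a (w ** diagm (\<lambda>k. exp (\<i> * of_real (\<theta> k))))"
    and t: "0 \<le> t" "t \<le> 1"
  shows "GG a (w ** diagm (\<lambda>k. exp (\<i> * of_real (t * \<theta> k))))"
  unfolding GG_def
proof
  fix z :: "complex^'n"
  define f where "f s = Re (qf (w ** diagm (\<lambda>k. exp (\<i> * of_real (s * \<theta> k)))) z)" for s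
  define m where "m n = nat \<lfloor>t * 2^n\<rfloor>" for n :: nat
  define ts where "ts n = real (m n) / 2^n" for n :: nat
  have mr: "real (m n) = of_int \<lfloor>t * 2^n\<rfloor>" for n using t by (simp add: m_def)
  have mle: "m n \<le> 2^n" for n
  proof -
    have "t * 2^n \<le> 2^n" using t by simp
    hence "\<lfloor>t * 2^n\<rfloor> \<le> 2^n" by (metis floor_mono floor_of_nat of_nat_numeral of_nat_power)
    then show ?thesis unfolding m_def by (simp add: nat_le_iff)
  qed
  have low: "a * nsq z \<le> f (ts n)" for n
    using GG_dyadic[OF a th G0 G1 mle[of n]] unfolding GG_def f_def ts_def by blast
  have ts1: "ts n \<le> t" for n
  proof -
    have "of_int \<lfloor>t * 2^n\<rfloor> \<le> t * 2^n" by (rule of_int_floor_le)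
    then show ?thesis unfolding ts_def mr by (simp add: field_simps)
  qed
  have ts2: "t - inverse (2^n) \<le> ts n" for n
  proof -
    have "t - inverse (2^n) = (t * 2^n - 1) / 2^n" by (simp add: field_simps)
    also have "\<dots> \<le> of_int \<lfloor>t * 2^n\<rfloor> / 2^n"
      by (rule divide_right_mono) (linarith, simp)
    finally show ?thesis unfolding ts_def mr .
  qed
  have "ts \<longlonglongrightarrow> t"
  proof (rule tendsto_sandwich[of "\<lambda>n. t - inverse (2^n)" _ _ "\<lambda>n. t"])
    show "\<forall>\<^sub>F n in sequentially. t - inverse (2 ^ n) \<le> ts n" using ts2 by simp
    show "\<forall>\<^sub>F n in sequentially. ts n \<le> t" using ts1 by simp
    have "(\<lambda>n. inverse ((2::real)^n)) \<longlonglongrightarrow> 0" by (rule LIMSEQ_inverse_realpow_zero) simp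
    then show "(\<lambda>n. t - inverse ((2::real)^n)) \<longlonglongrightarrow> t" by (auto intro: tendsto_eq_intros)
  qed simp
  moreover have "isCont f t"
    unfolding f_def qf_diag by (intro continuous_intros continuous_Re)
  ultimately have "(\<lambda>n. f (ts n)) \<longlonglongrightarrow> f t" by (rule isCont_tendsto_compose[rotated])
  then have "a * nsq z \<le> f t" using low by (intro LIMSEQ_le_const) auto
  then show "a * nsq z \<le> Re (qf (w ** diagm (\<lambda>k. exp (\<i> * of_real (t * \<theta> k)))) z)"
    by (simp add: f_def)
qed

lemma GG_conj:
  assumes u: "unitary U"
  shows "GG a (U ** M ** cadjoint U) \<longleftrightarrow> GG a M"
proof -
  have UU1: "U ** cadjoint U = mat 1" and UU2: "cadjoint U ** U = mat 1" using u by (auto simp: unitary_def)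
  have q: "qf (U ** M ** cadjoint U) z = qf M (cadjoint U *v z)" for z
    unfolding qf_cin by (simp add: matrix_vector_mul_assoc[symmetric] cin_mult)
  have n: "nsq (cadjoint U *v z) = nsq z" for z
  proof -
    have "cin (cadjoint U *v z) (cadjoint U *v z) = cin z z"
      by (simp add: cin_mult[symmetric] matrix_vector_mul_assoc UU1)
    then show ?thesis by (simp add: cin_self)
  qed
  have bk: "cadjoint U *v (U *v y) = y" for y
    by (simp add: matrix_vector_mul_assoc UU2)
  show ?thesis
  proof
    assume "GG a (U ** M ** cadjoint U)"
    hence h: "a * nsq z \<le> Re (qf M (cadjoint U *v z))" for z unfolding GG_def q n by blast
    show "GG a M" unfolding GG_def
    proof
      fix y
      have "nsq (U *v y) = nsq y" using n[of "U *v y"] bk[of y] by simp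
      then show "a * nsq y \<le> Re (qf M y)" using h[of "U *v y"] bk[of y] by simp
    qed
  next
    assume "GG a M"
    hence h: "a * nsq z \<le> Re (qf M z)" for z unfolding GG_def by blast
    show "GG a (U ** M ** cadjoint U)" unfolding GG_def q
    proof
      fix z
      show "a * nsq z \<le> Re (qf M (cadjoint U *v z))" using h[of "cadjoint U *v z"] n[of z] by simp
    qed
  qed
qed

lemma mv_linear: "linear (\<lambda>z. (x::'n::finite cmat) *v z)"
  by (rule linearI) (simp_all add: mv_add mv_scaleR)

theorem corollary3p6:
  fixes c :: real and v x :: "complex^'n::finite^'n"
  assumes "c \<ge> 0"
    and "unitary v"
    and "skew_adjoint x"
    and "op_norm x < pi"
    and "loewner_ge (v + matrix_inv v) (c *\<^sub>R mat 1)"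
    and "loewner_ge (v ** mat_exp x + matrix_inv (v ** mat_exp x)) (c *\<^sub>R mat 1)"
  shows "\<forall>t\<in>{0..1::real}.
    loewner_ge (v ** mat_exp (t *\<^sub>R x) + matrix_inv (v ** mat_exp (t *\<^sub>R x))) (c *\<^sub>R mat 1)"
proof -
  note c0 = assms(1) and uv = assms(2) and sk = assms(3) and opn = assms(4)
  define H :: "'n cmat" where "H = (\<chi> i j. - \<i> * x$i$j)"
  have skx: "cnj (x$j$i) = - x$i$j" for i j
  proof -
    have "cadjoint x $ i $ j = (- x) $ i $ j" using sk by (simp add: skew_adjoint_def)
    then show ?thesis by (simp add: cadjoint_def)
  qed
  have "hermitian H"
    unfolding hermitian_def cadjoint_def H_def vec_eq_iff using skx by simp
  then obtain U and \<mu> :: "'n \<Rightarrow> real" where uU: "unitary U"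
    and HU: "H = U ** diagm (\<lambda>k. of_real (\<mu> k)) ** cadjoint U"
    using spectral_herm by blast
  have UU1: "U ** cadjoint U = mat 1" and UU2: "cadjoint U ** U = mat 1" using uU by (auto simp: unitary_def)
  define D where "D = diagm (\<lambda>k. \<i> * of_real (\<mu> k))"
  have xU: "x = U ** D ** cadjoint U"
  proof -
    have "x$r$s = (U ** D ** cadjoint U)$r$s" for r s
    proof -
      have "x$r$s = \<i> * H$r$s" by (simp add: H_def)
      also have "\<dots> = (\<Sum>k\<in>UNIV. U$r$k * (\<i> * of_real (\<mu> k)) * cadjoint U$k$s)"
        unfolding HU diag_entry by (simp add: sum_distrib_left mult_ac)
      finally show ?thesis unfolding D_def diag_entry .
    qed
    then show ?thesis by (simp add: vec_eq_iff)
  qed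
  have mu_bound: "\<bar>\<mu> k\<bar> < pi" for k
  proof -
    define u :: "complex^'n" where "u = (\<chi> r. U$r$k)"
    have "x ** U = U ** D" unfolding xU by (metis matrix_mul_assoc UU2 matrix_mul_rid)
    hence e: "(x ** U)$r$k = U$r$k * (\<i> * of_real (\<mu> k))" for r
      by (simp add: D_def mult_diagm_entry)
    have "(x *v u)$r = (x ** U)$r$k" for r
      by (simp add: u_def matrix_vector_mult_def matrix_matrix_mult_def)
    hence xu: "x *v u = (\<i> * of_real (\<mu> k)) *s u"
      unfolding vec_eq_iff using e by (simp add: u_def mult.commute)
    have "nsq u = 1"
    proof -
      have "(cadjoint U ** U)$k$k = 1" using UU2 by (simp add: mat_def)
      hence "cin u u = 1" by (simp add: cin_def u_def cadjoint_def matrix_matrix_mult_def)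
      then show ?thesis by (simp add: cin_self)
    qed
    hence nu: "norm u = 1" using norm_ge_zero[of u] by (auto simp: nsq_norm power2_eq_1_iff)
    have "norm (x *v u) = \<bar>\<mu> k\<bar>"
    proof -
      have "nsq (x *v u) = (\<mu> k)^2 * nsq u"
        unfolding xu nsq_def by (simp add: norm_mult sum_distrib_left power_mult_distrib)
      then have "(norm (x *v u))^2 = (\<mu> k)^2" using \<open>nsq u = 1\<close> by (simp add: nsq_norm)
      then show ?thesis by (metis abs_norm_cancel power2_abs real_sqrt_abs real_sqrt_unique norm_ge_zero abs_ge_zero)
    qed
    moreover have "norm (x *v u) \<le> op_norm x * norm u"
      unfolding op_norm_def by (rule onorm) (simp add: linear_conv_bounded_linear[symmetric] mv_linear)
    ultimately show ?thesis using nu opn by simp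
  qed
  have expt: "mat_exp (t *\<^sub>R x) = U ** diagm (\<lambda>k. exp (\<i> * of_real (t * \<mu> k))) ** cadjoint U" for t
  proof -
    have "t *\<^sub>R x = U ** diagm (\<lambda>k. t *\<^sub>R (\<i> * of_real (\<mu> k))) ** cadjoint U"
      unfolding xU D_def by (rule scaleR_conj)
    also have "(\<lambda>k. t *\<^sub>R (\<i> * of_real (\<mu> k))) = (\<lambda>k. \<i> * of_real (t * \<mu> k))"
      by (simp add: scaleR_conv_of_real mult_ac)
    finally show ?thesis using mat_exp_conj[OF uU] by simp
  qed
  define w where "w = cadjoint U ** v ** U"
  have vw: "v = U ** w ** cadjoint U"
    unfolding w_def by (simp add: matrix_mul_assoc UU1 flip: matrix_mul_assoc) (metis UU1 matrix_mul_assoc matrix_mul_lid matrix_mul_rid)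
  define E where "E t = diagm (\<lambda>k. exp (\<i> * of_real (t * \<mu> k)))" for t
  have vE: "v ** mat_exp (t *\<^sub>R x) = U ** (w ** E t) ** cadjoint U" for t
  proof -
    have "(U ** w ** cadjoint U) ** (U ** E t ** cadjoint U) = U ** w ** (cadjoint U ** U) ** E t ** cadjoint U"
      by (simp add: matrix_mul_assoc)
    also have "\<dots> = U ** (w ** E t) ** cadjoint U" by (simp add: UU2 matrix_mul_assoc)
    finally show ?thesis unfolding expt E_def[symmetric] vw[symmetric] .
  qed
  have uvt: "unitary (v ** mat_exp (t *\<^sub>R x))" for t
    unfolding expt by (intro unitary_mult uv uU unitary_adj unitary_diag) simp
  have a0: "c/2 \<ge> 0" using c0 by simp
  have G0: "GG (c/2) w"
    using assms(5) loewner_GG[OF uv] GG_conj[OF uU] vw by simp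
  have G1: "GG (c/2) (w ** diagm (\<lambda>k. exp (\<i> * of_real (\<mu> k))))"
  proof -
    have "GG (c/2) (v ** mat_exp (1 *\<^sub>R x))" using assms(6) loewner_GG[OF uvt[of 1]] by simp
    then show ?thesis unfolding vE GG_conj[OF uU] E_def by simp
  qed
  show ?thesis
  proof
    fix t :: real assume "t \<in> {0..1}"
    hence t: "0 \<le> t" "t \<le> 1" by auto
    have "GG (c/2) (w ** E t)"
      unfolding E_def by (rule GG_path[OF a0 mu_bound G0 G1 t])
    then have "GG (c/2) (v ** mat_exp (t *\<^sub>R x))" unfolding vE GG_conj[OF uU] .
    then show "loewner_ge (v ** mat_exp (t *\<^sub>R x) + matrix_inv (v ** mat_exp (t *\<^sub>R x))) (c *\<^sub>R mat 1)"
      using loewner_GG[OF uvt[of t]] by simp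
  qed
qed

end
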